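(* Let $\mathcal{K}$ be the fraction field of a discrete valuation ring $\mathscr{O}_{\mathcal{K}}$ with residue field $k$ and normalized discrete valuation $v:\mathcal{K}^\times\to\mathbf{Z}$. Let $E$ be an elliptic curve over $\mathcal{K}$ with potentially good reduction, and let $\Delta$ be the discriminant of a Weierstrass model of $E$ over $\mathcal{K}$. If $E$ has good reduction, then $v(\Delta) \equiv 0 \bmod 12$. Conversely, if $v(\Delta)\equiv 0 \bmod 12$ then $E$ has good reduction, provided that either (1) $\mathrm{char}(k) \neq 2, 3$, or (2) $\mathrm{char}(k)\neq 2$ and $E(\mathcal{K})[2] \neq O$.
   Context: $\Delta$ is well defined modulo $(\mathcal{K}^\times)^{12}$, independent of the choice of Weierstrass model. *)

theory Defs
  imports Main
begin

text \<open>A normalized discrete valuation on a field: a surjective map from the nonzero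
  elements onto the integers, multiplicative-to-additive, satisfying the ultrametric
  inequality. (Its values at 0 are irrelevant.) The DVR is {x. x = 0 or v x >= 0}.\<close>

definition discrete_valuation :: "('a::field \<Rightarrow> int) \<Rightarrow> bool" where
  "discrete_valuation v \<longleftrightarrow>
     (\<forall>x y. x \<noteq> 0 \<longrightarrow> y \<noteq> 0 \<longrightarrow> v (x * y) = v x + v y) \<and>
     (\<forall>x y. x \<noteq> 0 \<longrightarrow> y \<noteq> 0 \<longrightarrow> x + y \<noteq> 0 \<longrightarrow> v (x + y) \<ge> min (v x) (v y)) \<and>
     (\<forall>n. \<exists>x. x \<noteq> 0 \<and> v x = n)"

definition integral :: "('a::field \<Rightarrow> int) \<Rightarrow> 'a \<Rightarrow> bool" where
  "integral v x \<longleftrightarrow> x = 0 \<or> v x \<ge> 0"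

text \<open>The residue field has characteristic different from p iff p is a unit of the
  valuation ring, i.e. p \<noteq> 0 in the field and v(p) = 0.\<close>
definition residue_char_ne :: "('a::field \<Rightarrow> int) \<Rightarrow> nat \<Rightarrow> bool" where
  "residue_char_ne v p \<longleftrightarrow> (of_nat p :: 'a) \<noteq> 0 \<and> v (of_nat p) = 0"

text \<open>(a1,a2,a3,a4,a6) represents y^2 + a1 x y + a3 y = x^3 + a2 x^2 + a4 x + a6.\<close>
type_synonym 'a weier = "'a \<times> 'a \<times> 'a \<times> 'a \<times> 'a"

fun disc :: "'a::comm_ring_1 weier \<Rightarrow> 'a" where
  "disc (a1, a2, a3, a4, a6) =
    (let b2 = a1^2 + 4*a2; b4 = 2*a4 + a1*a3; b6 = a3^2 + 4*a6;
         b8 = a1^2*a6 + 4*a2*a6 - a1*a3*a4 + a2*a3^2 - a4^2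
     in - (b2^2*b8) - 8*b4^3 - 27*b6^2 + 9*b2*b4*b6)"

definition elliptic :: "'a::field weier \<Rightarrow> bool" where
  "elliptic E \<longleftrightarrow> disc E \<noteq> 0"

fun map_weier :: "('a \<Rightarrow> 'b) \<Rightarrow> 'a weier \<Rightarrow> 'b weier" where
  "map_weier f (a1, a2, a3, a4, a6) = (f a1, f a2, f a3, f a4, f a6)"

text \<open>Change of variables x = u^2 x' + r, y = u^3 y' + s u^2 x' + t (Silverman III.1).\<close>
fun change_coords :: "'a::field \<Rightarrow> 'a \<Rightarrow> 'a \<Rightarrow> 'a \<Rightarrow> 'a weier \<Rightarrow> 'a weier" where
  "change_coords u r s t (a1, a2, a3, a4, a6) =
    ((a1 + 2*s) / u,
     (a2 - s*a1 + 3*r - s^2) / u^2,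
     (a3 + r*a1 + 2*t) / u^3,
     (a4 - s*a3 + 2*r*a2 - (t + r*s)*a1 + 3*r^2 - 2*s*t) / u^4,
     (a6 + r*a4 + r^2*a2 + r^3 - t*a3 - t^2 - r*t*a1) / u^6)"

definition integral_weier :: "('a::field \<Rightarrow> int) \<Rightarrow> 'a weier \<Rightarrow> bool" where
  "integral_weier v E \<longleftrightarrow>
     (case E of (a1, a2, a3, a4, a6) \<Rightarrow>
        integral v a1 \<and> integral v a2 \<and> integral v a3 \<and> integral v a4 \<and> integral v a6)"

text \<open>Good reduction: some Weierstrass model of E (over the same field) is integral and has
  unit discriminant, i.e. its reduction modulo the maximal ideal is nonsingular.\<close>
definition good_reduction :: "('a::field \<Rightarrow> int) \<Rightarrow> 'a weier \<Rightarrow> bool" where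
  "good_reduction v E \<longleftrightarrow>
     (\<exists>u r s t. u \<noteq> 0 \<and> integral_weier v (change_coords u r s t E)
                \<and> disc (change_coords u r s t E) \<noteq> 0
                \<and> v (disc (change_coords u r s t E)) = 0)"

text \<open>Nontrivial 2-torsion point in E(K): an affine point P with P = -P.\<close>
fun has_2torsion :: "'a::field weier \<Rightarrow> bool" where
  "has_2torsion (a1, a2, a3, a4, a6) =
    (\<exists>x y. y^2 + a1*x*y + a3*y = x^3 + a2*x^2 + a4*x + a6 \<and> y = - y - a1*x - a3)"

definition field_hom :: "('a::field \<Rightarrow> 'b::field) \<Rightarrow> bool" where
  "field_hom i \<longleftrightarrow> i 1 = 1 \<and> (\<forall>x y. i (x + y) = i x + i y) \<and> (\<forall>x y. i (x * y) = i x * i y)"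

definition finite_extension :: "('a::field \<Rightarrow> 'b::field) \<Rightarrow> bool" where
  "finite_extension i \<longleftrightarrow> field_hom i \<and>
     (\<exists>B. finite B \<and> (\<forall>y. \<exists>c. y = (\<Sum>b\<in>B. i (c b) * b)))"

definition extends_valuation :: "('a::field \<Rightarrow> 'b::field) \<Rightarrow> ('a \<Rightarrow> int) \<Rightarrow> ('b \<Rightarrow> int) \<Rightarrow> bool" where
  "extends_valuation i v w \<longleftrightarrow> (\<exists>e::int. e > 0 \<and> (\<forall>x. x \<noteq> 0 \<longrightarrow> w (i x) = e * v x))"

text \<open>Potentially good reduction, relative to the extension field type 'b: E acquires good
  reduction over a finite extension L (of type 'b) w.r.t. a valuation extending v.\<close>
definition pot_good_reduction_in :: "'b::field itself \<Rightarrow> ('a::field \<Rightarrow> int) \<Rightarrow> 'a weier \<Rightarrow> bool" where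
  "pot_good_reduction_in (_ :: 'b::field itself) v E \<longleftrightarrow>
     (\<exists>(i :: 'a \<Rightarrow> 'b::field) w. finite_extension i \<and> discrete_valuation w \<and>
        extends_valuation i v w \<and> good_reduction w (map_weier i E))"

end

theory Submission
  imports Defs
begin

fun c4 :: "'a::comm_ring_1 weier \<Rightarrow> 'a" where
  "c4 (a1,a2,a3,a4,a6) = (a1^2+4*a2)^2 - 24*(2*a4 + a1*a3)"
fun c6 :: "'a::comm_ring_1 weier \<Rightarrow> 'a" where
  "c6 (a1,a2,a3,a4,a6) = -((a1^2+4*a2)^3) + 36*(a1^2+4*a2)*(2*a4+a1*a3) - 216*(a3^2+4*a6)"

lemma c4_shift:
  fixes a1 a2 a3 a4 a6 r s t :: "'a::comm_ring_1"
  shows "c4 (a1 + 2*s, a2 - s*a1 + 3*r - s^2, a3 + r*a1 + 2*t,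
     a4 - s*a3 + 2*r*a2 - (t + r*s)*a1 + 3*r^2 - 2*s*t,
     a6 + r*a4 + r^2*a2 + r^3 - t*a3 - t^2 - r*t*a1) = c4 (a1,a2,a3,a4,a6)"
  by (simp add: algebra_simps power2_eq_square power3_eq_cube)

lemma disc_shift:
  fixes a1 a2 a3 a4 a6 r s t :: "'a::comm_ring_1"
  shows "disc (a1 + 2*s, a2 - s*a1 + 3*r - s^2, a3 + r*a1 + 2*t,
     a4 - s*a3 + 2*r*a2 - (t + r*s)*a1 + 3*r^2 - 2*s*t,
     a6 + r*a4 + r^2*a2 + r^3 - t*a3 - t^2 - r*t*a1) = disc (a1,a2,a3,a4,a6)"
  unfolding disc.simps Let_def by (simp add: algebra_simps power2_eq_square power3_eq_cube)

lemma disc_hom: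
  fixes a1 a2 a3 a4 a6 u :: "'a::comm_ring_1"
  shows "disc (u*a1, u^2*a2, u^3*a3, u^4*a4, u^6*a6) = u^12 * disc (a1,a2,a3,a4,a6)"
  unfolding disc.simps Let_def by (simp add: algebra_simps power_mult_distrib eval_nat_numeral)

lemma c4_hom:
  fixes a1 a2 a3 a4 a6 u :: "'a::comm_ring_1"
  shows "c4 (u*a1, u^2*a2, u^3*a3, u^4*a4, u^6*a6) = u^4 * c4 (a1,a2,a3,a4,a6)"
  by (simp add: algebra_simps power_mult_distrib eval_nat_numeral)

lemma c4c6:
  fixes a1 a2 a3 a4 a6 :: "'a::comm_ring_1"
  shows "c4 (a1,a2,a3,a4,a6)^3 - c6 (a1,a2,a3,a4,a6)^2 = 1728 * disc (a1,a2,a3,a4,a6)"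
  unfolding disc.simps Let_def c4.simps c6.simps by (simp add: algebra_simps power2_eq_square power3_eq_cube)

lemma case1_a4:
  fixes a4 a6 r s t :: "'a::comm_ring_1"
  shows "48 * (a4 - s*(2*r*s - 2*t) + 2*r*(-3*r - s^2) - (t + r*s)*(-2*s) + 3*r^2 - 2*s*t)
     = - c4 (-2*s, -3*r - s^2, 2*r*s - 2*t, a4, a6)"
  by (simp add: algebra_simps power2_eq_square power3_eq_cube)
lemma case1_a6:
  fixes a4 a6 r s t :: "'a::comm_ring_1"
  shows "864 * (a6 + r*a4 + r^2*(-3*r - s^2) + r^3 - t*(2*r*s - 2*t) - t^2 - r*t*(-2*s))
     = - c6 (-2*s, -3*r - s^2, 2*r*s - 2*t, a4, a6)"
  by (simp add: algebra_simps power2_eq_square power3_eq_cube)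

lemma dv_mul: "discrete_valuation v \<Longrightarrow> x \<noteq> 0 \<Longrightarrow> y \<noteq> 0 \<Longrightarrow> v (x*y) = v x + v y"
  by (simp add: discrete_valuation_def)
lemma dv_add: "discrete_valuation v \<Longrightarrow> x \<noteq> 0 \<Longrightarrow> y \<noteq> 0 \<Longrightarrow> x + y \<noteq> 0 \<Longrightarrow> v (x+y) \<ge> min (v x) (v y)"
  by (simp add: discrete_valuation_def)
lemma dv_surj: "discrete_valuation v \<Longrightarrow> \<exists>x. x \<noteq> 0 \<and> v x = n"
  by (simp add: discrete_valuation_def)
lemma dv_one: "discrete_valuation v \<Longrightarrow> v 1 = 0"
  using dv_mul[of v 1 1] by simp
lemma dv_inverse: "discrete_valuation v \<Longrightarrow> x \<noteq> 0 \<Longrightarrow> v (inverse x) = - v x"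
  using dv_mul[of v x "inverse x"] dv_one[of v] by simp
lemma dv_divide: "discrete_valuation v \<Longrightarrow> x \<noteq> 0 \<Longrightarrow> y \<noteq> 0 \<Longrightarrow> v (x / y) = v x - v y"
  using dv_mul[of v x "inverse y"] dv_inverse[of v y] by (simp add: divide_inverse)
lemma dv_power: "discrete_valuation v \<Longrightarrow> x \<noteq> 0 \<Longrightarrow> v (x ^ n) = int n * v x"
  by (induction n) (simp_all add: dv_one dv_mul algebra_simps)
lemma dv_minus_one: "discrete_valuation v \<Longrightarrow> v (-1) = 0"
  using dv_mul[of v "-1" "-1"] dv_one[of v] by simp
lemma dv_uminus: "discrete_valuation v \<Longrightarrow> x \<noteq> 0 \<Longrightarrow> v (- x) = v x"
  using dv_mul[of v "-1" x] dv_minus_one[of v] by simp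
lemma dv_strict:
  assumes "discrete_valuation v" "x \<noteq> 0" "y \<noteq> 0" "v x < v y"
  shows "x + y \<noteq> 0 \<and> v (x + y) = v x"
proof -
  have ne: "x + y \<noteq> 0"
  proof
    assume "x + y = 0" then have "y = - x" by (metis add.commute eq_neg_iff_add_eq_0)
    then show False using assms dv_uminus[of v x] by simp
  qed
  have "v (x+y) \<ge> min (v x) (v y)" using dv_add assms ne by blast
  moreover have "v ((x+y) + (-y)) \<ge> min (v (x+y)) (v (-y))"
    using dv_add[of v "x+y" "-y"] assms ne by simp
  ultimately show ?thesis using assms dv_uminus[of v y] ne by simp
qed

definition lb :: "('a::field \<Rightarrow> int) \<Rightarrow> int \<Rightarrow> 'a \<Rightarrow> bool" where
  "lb v k x \<longleftrightarrow> x = 0 \<or> v x \<ge> k"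

lemma lb_add: "discrete_valuation v \<Longrightarrow> lb v k x \<Longrightarrow> lb v k y \<Longrightarrow> lb v k (x + y)"
  unfolding lb_def using dv_add[of v x y] by fastforce
lemma lb_mul: "discrete_valuation v \<Longrightarrow> lb v k x \<Longrightarrow> lb v l y \<Longrightarrow> lb v (k+l) (x * y)"
  unfolding lb_def using dv_mul[of v x y] by fastforce
lemma lb_uminus: "discrete_valuation v \<Longrightarrow> lb v k x \<Longrightarrow> lb v k (- x)"
  unfolding lb_def using dv_uminus[of v x] by fastforce
lemma lb_diff: "discrete_valuation v \<Longrightarrow> lb v k x \<Longrightarrow> lb v k y \<Longrightarrow> lb v k (x - y)"
  using lb_add[of v k x "-y"] lb_uminus[of v k y] by simp
lemma lb_mono: "lb v k x \<Longrightarrow> l \<le> k \<Longrightarrow> lb v l x"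
  unfolding lb_def by auto

lemma integral_lb: "integral v x \<longleftrightarrow> lb v 0 x"
  by (simp add: integral_def lb_def)

lemma int_add: "discrete_valuation v \<Longrightarrow> integral v x \<Longrightarrow> integral v y \<Longrightarrow> integral v (x + y)"
  by (simp add: integral_lb lb_add)
lemma int_mul: "discrete_valuation v \<Longrightarrow> integral v x \<Longrightarrow> integral v y \<Longrightarrow> integral v (x * y)"
  using lb_mul[of v 0 x 0 y] by (simp add: integral_lb)
lemma int_uminus: "discrete_valuation v \<Longrightarrow> integral v x \<Longrightarrow> integral v (- x)"
  by (simp add: integral_lb lb_uminus)
lemma int_diff: "discrete_valuation v \<Longrightarrow> integral v x \<Longrightarrow> integral v y \<Longrightarrow> integral v (x - y)"
  by (simp add: integral_lb lb_diff)
lemma int_one: "discrete_valuation v \<Longrightarrow> integral v 1"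
  by (simp add: integral_def dv_one)
lemma int_zero: "integral v 0"
  by (simp add: integral_def)
lemma int_of_nat: "discrete_valuation v \<Longrightarrow> integral v (of_nat n)"
  by (induction n) (simp_all add: int_zero int_add int_one)
lemma int_numeral: "discrete_valuation v \<Longrightarrow> integral v (numeral n)"
  by (metis of_nat_numeral int_of_nat)
lemma int_power: "discrete_valuation v \<Longrightarrow> integral v x \<Longrightarrow> integral v (x ^ n)"
proof (induction n)
  case 0 then show ?case by (simp add: int_one)
next
  case (Suc n) then show ?case using int_mul[of v x "x^n"] by simp
qed

lemmas int_rules = int_add int_mul int_uminus int_diff int_one int_zero int_numeral int_power

lemma int_c4: "discrete_valuation v \<Longrightarrow> integral_weier v E \<Longrightarrow> integral v (c4 E)"
proof -
  assume v: "discrete_valuation v" and h: "integral_weier v E"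
  obtain a1 a2 a3 a4 a6 where E: "E = (a1,a2,a3,a4,a6)" by (cases E) auto
  have i: "integral v a1" "integral v a2" "integral v a3" "integral v a4" using h E by (simp_all add: integral_weier_def)
  show ?thesis unfolding E c4.simps
    by (intro int_diff int_add int_mul int_power int_numeral v i)
qed

lemma fh_add: "field_hom i \<Longrightarrow> i (x + y) = i x + i y" by (simp add: field_hom_def)
lemma fh_mul: "field_hom i \<Longrightarrow> i (x * y) = i x * i y" by (simp add: field_hom_def)
lemma fh_one: "field_hom i \<Longrightarrow> i 1 = 1" by (simp add: field_hom_def)
lemma fh_zero: "field_hom i \<Longrightarrow> i 0 = 0" using fh_add[of i 0 0] by (metis add.right_neutral add_left_cancel)
lemma fh_uminus: "field_hom i \<Longrightarrow> i (- x) = - i x"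
  using fh_add[of i x "-x"] fh_zero[of i] by (metis add.commute eq_neg_iff_add_eq_0 add.right_inverse)
lemma fh_diff: "field_hom i \<Longrightarrow> i (x - y) = i x - i y"
  using fh_add[of i x "-y"] fh_uminus[of i y] by simp
lemma fh_power: "field_hom i \<Longrightarrow> i (x ^ n) = i x ^ n"
  by (induction n) (simp_all add: fh_one fh_mul)
lemma fh_of_nat: "field_hom i \<Longrightarrow> i (of_nat n) = of_nat n"
  by (induction n) (simp_all add: fh_zero fh_add fh_one)
lemma fh_numeral: "field_hom i \<Longrightarrow> i (numeral n) = numeral n"
  using fh_of_nat[of i "numeral n"] by simp
lemma fh_nonzero: "field_hom i \<Longrightarrow> x \<noteq> 0 \<Longrightarrow> i x \<noteq> 0"
  using fh_mul[of i x "inverse x"] fh_one[of i] by auto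
lemma fh_divide: "field_hom i \<Longrightarrow> i (x / y) = i x / i y"
proof (cases "y = 0")
  case True assume "field_hom i" then show ?thesis using True by (simp add: fh_zero)
next
  case False assume h: "field_hom i"
  have "i (x / y) * i y = i x" using False h by (simp flip: fh_mul)
  then show ?thesis using fh_nonzero[OF h False] by (simp add: eq_divide_eq)
qed

lemmas fh_rules = fh_add fh_mul fh_one fh_zero fh_uminus fh_diff fh_power fh_numeral

lemma fh_disc: "field_hom i \<Longrightarrow> i (disc E) = disc (map_weier i E)"
  by (cases E) (simp add: Let_def fh_rules)
lemma fh_c4: "field_hom i \<Longrightarrow> i (c4 E) = c4 (map_weier i E)"
  by (cases E) (simp add: fh_rules)

fun scale :: "'a::field \<Rightarrow> 'a weier \<Rightarrow> 'a weier" where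
  "scale u (a1,a2,a3,a4,a6) = (a1/u, a2/u^2, a3/u^3, a4/u^4, a6/u^6)"

lemma change_scale: "change_coords u r s t E = scale u (change_coords 1 r s t E)"
  by (cases E) simp

lemma disc_shift1: "disc (change_coords 1 r s t E) = disc E"
proof -
  obtain a1 a2 a3 a4 a6 where E: "E = (a1,a2,a3,a4,a6)" by (cases E) auto
  show ?thesis unfolding E change_coords.simps power_one div_by_1 by (rule disc_shift)
qed
lemma c4_shift1: "c4 (change_coords 1 r s t E) = c4 E"
proof -
  obtain a1 a2 a3 a4 a6 where E: "E = (a1,a2,a3,a4,a6)" by (cases E) auto
  show ?thesis unfolding E change_coords.simps power_one div_by_1 by (rule c4_shift)
qed

lemma disc_scale:
  fixes u :: "'a::field"
  assumes u: "u \<noteq> 0" shows "disc (scale u E) = disc E / u^12"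
proof -
  obtain a1 a2 a3 a4 a6 where E: "E = (a1,a2,a3,a4,a6)" by (cases E) auto
  have eqs: "u*(a1/u) = a1" "u^2*(a2/u^2) = a2" "u^3*(a3/u^3) = a3" "u^4*(a4/u^4) = a4" "u^6*(a6/u^6) = a6"
    using u by simp_all
  have h: "disc (u*(a1/u), u^2*(a2/u^2), u^3*(a3/u^3), u^4*(a4/u^4), u^6*(a6/u^6))
     = u^12 * disc (a1/u, a2/u^2, a3/u^3, a4/u^4, a6/u^6)" by (rule disc_hom[of u "a1/u" "a2/u^2" "a3/u^3" "a4/u^4" "a6/u^6"])
  have h2: "disc E = u^12 * disc (scale u E)" using h unfolding eqs E scale.simps .
  have h3: "disc (scale u E) = (u^12 * disc (scale u E)) / u^12" using u by simp
  show ?thesis using h3 h2 by (simp only:)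
qed

lemma c4_scale:
  fixes u :: "'a::field"
  assumes u: "u \<noteq> 0" shows "c4 (scale u E) = c4 E / u^4"
proof -
  obtain a1 a2 a3 a4 a6 where E: "E = (a1,a2,a3,a4,a6)" by (cases E) auto
  have eqs: "u*(a1/u) = a1" "u^2*(a2/u^2) = a2" "u^3*(a3/u^3) = a3" "u^4*(a4/u^4) = a4" "u^6*(a6/u^6) = a6"
    using u by simp_all
  have h: "c4 (u*(a1/u), u^2*(a2/u^2), u^3*(a3/u^3), u^4*(a4/u^4), u^6*(a6/u^6))
     = u^4 * c4 (a1/u, a2/u^2, a3/u^3, a4/u^4, a6/u^6)" by (rule c4_hom[of u "a1/u" "a2/u^2" "a3/u^3" "a4/u^4" "a6/u^6"])
  have h2: "c4 E = u^4 * c4 (scale u E)" using h unfolding eqs E scale.simps .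
  have h3: "c4 (scale u E) = (u^4 * c4 (scale u E)) / u^4" using u by simp
  show ?thesis using h3 h2 by (simp only:)
qed

lemma disc_change:
  fixes u :: "'a::field"
  assumes u: "u \<noteq> 0" shows "disc (change_coords u r s t E) = disc E / u^12"
proof -
  have "disc (change_coords u r s t E) = disc (scale u (change_coords 1 r s t E))"
    by (rule arg_cong[OF change_scale])
  also have "\<dots> = disc (change_coords 1 r s t E) / u^12" by (rule disc_scale[OF u])
  also have "\<dots> = disc E / u^12" by (simp only: disc_shift1)
  finally show ?thesis .
qed

lemma c4_change:
  fixes u :: "'a::field"
  assumes u: "u \<noteq> 0" shows "c4 (change_coords u r s t E) = c4 E / u^4"
proof -
  have "c4 (change_coords u r s t E) = c4 (scale u (change_coords 1 r s t E))"
    by (rule arg_cong[OF change_scale])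
  also have "\<dots> = c4 (change_coords 1 r s t E) / u^4" by (rule c4_scale[OF u])
  also have "\<dots> = c4 E / u^4" by (simp only: c4_shift1)
  finally show ?thesis .
qed

lemma lb_div: "discrete_valuation v \<Longrightarrow> lb v k x \<Longrightarrow> y \<noteq> 0 \<Longrightarrow> lb v (k - v y) (x / y)"
  unfolding lb_def by (cases "x = 0") (simp_all add: dv_divide)
lemma lb_cmul: "discrete_valuation v \<Longrightarrow> c \<noteq> 0 \<Longrightarrow> lb v k (c * x) \<Longrightarrow> lb v (k - v c) x"
  unfolding lb_def by (cases "x = 0") (simp_all add: dv_mul)
lemma lb_sq: "discrete_valuation v \<Longrightarrow> lb v (2*k) (x^2) \<Longrightarrow> lb v k x"
  unfolding lb_def by (cases "x = 0") (simp_all add: dv_power)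
lemma lb_numeral: "discrete_valuation v \<Longrightarrow> lb v 0 (numeral n)"
  using int_numeral integral_lb by blast

lemma key:
  fixes v :: "'a::field \<Rightarrow> int" and E :: "'a weier"
  assumes v: "discrete_valuation v" and ell: "elliptic E"
    and pg: "pot_good_reduction_in TYPE('b::field) v E" and c: "c4 E \<noteq> 0"
  shows "v (disc E) \<le> 3 * v (c4 E)"
proof -
  from pg obtain i :: "'a \<Rightarrow> 'b" and w where fe: "finite_extension i" and w: "discrete_valuation w"
    and ext: "extends_valuation i v w" and gr: "good_reduction w (map_weier i E)"
    unfolding pot_good_reduction_in_def by blast
  have fh: "field_hom i" using fe by (simp add: finite_extension_def)
  obtain e where e: "e > 0" "\<And>x. x \<noteq> 0 \<Longrightarrow> w (i x) = e * v x"
    using ext unfolding extends_valuation_def by blast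
  obtain u r s t where u: "u \<noteq> 0" and iw: "integral_weier w (change_coords u r s t (map_weier i E))"
    and dw: "w (disc (change_coords u r s t (map_weier i E))) = 0"
    using gr unfolding good_reduction_def by blast
  define E' where "E' = change_coords u r s t (map_weier i E)"
  have D: "disc E' = i (disc E) / u^12" unfolding E'_def using disc_change[OF u] fh_disc[OF fh] by simp
  have C: "c4 E' = i (c4 E) / u^4" unfolding E'_def using c4_change[OF u] fh_c4[OF fh] by simp
  have dE: "disc E \<noteq> 0" using ell by (simp add: elliptic_def)
  have idn: "i (disc E) \<noteq> 0" "i (c4 E) \<noteq> 0" using fh_nonzero[OF fh] dE c by auto
  have "integral w (c4 E')" unfolding E'_def by (rule int_c4[OF w iw])
  moreover have "c4 E' \<noteq> 0" using C idn u by simp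
  ultimately have c0: "w (c4 E') \<ge> 0" by (simp add: integral_def)
  have c1: "w (c4 E') = e * v (c4 E) - 4 * w u"
    using C dv_divide[OF w idn(2)] dv_power[OF w u] u e(2)[OF c] by simp
  have d1: "w (disc E') = e * v (disc E) - 12 * w u"
    using D dv_divide[OF w idn(1)] dv_power[OF w u] u e(2)[OF dE] by simp
  have "e * v (disc E) \<le> e * (3 * v (c4 E))" using c0 c1 d1 dw E'_def by simp
  then show ?thesis using e(1) by (simp add: mult_le_cancel_left_pos)
qed

lemma case2_val:
  fixes v :: "'a::field \<Rightarrow> int"
  assumes v: "discrete_valuation v" and v2: "v 2 = 0" and n2: "(2::'a) \<noteq> 0"
    and dn: "16*B^2*(A^2-4*B) \<noteq> 0" and dv: "v (16*B^2*(A^2-4*B)) = 0"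
    and cl: "lb v 0 (16*(A^2-3*B))"
  shows "integral v A \<and> integral v B"
proof -
  have B: "B \<noteq> 0" and X: "A^2-4*B \<noteq> 0" and n16: "(16::'a) \<noteq> 0" using dn by auto
  have v16: "v 16 = 0" using dv_power[OF v n2, of 4] v2 by simp
  have e1: "2 * v B + v (A^2-4*B) = 0"
    using dv dv_mul[OF v, of 16 "B^2*(A^2-4*B)"] dv_mul[OF v, of "B^2" "A^2-4*B"] dv_power[OF v B, of 2]
      B X n16 v16 by (simp add: mult.assoc)
  have cl': "lb v 0 ((A^2-4*B) + B)"
    using lb_cmul[OF v n16 cl] v16 by (simp add: algebra_simps)
  have vB: "v B = 0"
  proof (rule ccontr)
    assume "v B \<noteq> 0"
    then consider "v B < 0" | "v B > 0" by linarith
    then show False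
    proof cases
      case 1
      then have "v B < v (A^2-4*B)" using e1 by linarith
      then have "B + (A^2-4*B) \<noteq> 0 \<and> v (B + (A^2-4*B)) = v B" using dv_strict[OF v B X] by blast
      then show False using cl' 1 unfolding lb_def by (simp add: add.commute)
    next
      case 2
      then have "v (A^2-4*B) < v B" using e1 by linarith
      moreover have "v (A^2-4*B) < 0" using e1 2 by linarith
      ultimately show False using dv_strict[OF v X B] cl' unfolding lb_def by simp
    qed
  qed
  then have vX: "v (A^2-4*B) = 0" using e1 by simp
  have l4: "lb v 0 (4::'a)" by (rule lb_numeral[OF v])
  have lB: "lb v 0 B" using vB by (simp add: lb_def)
  have lX: "lb v 0 (A^2-4*B)" using vX by (simp add: lb_def)
  have l4B: "lb v 0 (4*B)" using lb_mul[OF v l4 lB] by simp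
  have "lb v 0 ((A^2-4*B) + 4*B)" by (rule lb_add[OF v lX l4B])
  then have "lb v (2*0) (A^2)" by simp
  then have "lb v 0 A" using lb_sq[OF v] by blast
  then show ?thesis using vB by (simp add: integral_lb lb_def)
qed

theorem lemma2p1:
  fixes v :: "'a::field \<Rightarrow> int" and E :: "'a weier"
  assumes "discrete_valuation v"
    and "elliptic E"
    and "pot_good_reduction_in TYPE('b::field) v E"
  shows "(good_reduction v E \<longrightarrow> v (disc E) mod 12 = 0) \<and>
         ((v (disc E) mod 12 = 0 \<and>
           ((residue_char_ne v 2 \<and> residue_char_ne v 3) \<or>
            (residue_char_ne v 2 \<and> has_2torsion E)))
          \<longrightarrow> good_reduction v E)"
proof -
  note v = assms(1) and ell = assms(2) and pg = assms(3)
  have dE: "disc E \<noteq> 0" using ell by (simp add: elliptic_def)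
  have P1: "good_reduction v E \<longrightarrow> v (disc E) mod 12 = 0"
  proof
    assume "good_reduction v E"
    then obtain u r s t where u: "u \<noteq> 0" and dv0: "v (disc (change_coords u r s t E)) = 0"
      unfolding good_reduction_def by blast
    have "v (disc (change_coords u r s t E)) = v (disc E) - 12 * v u"
      using disc_change[OF u, of r s t E] dv_divide[OF v dE] dv_power[OF v u, of 12] u by simp
    then have "v (disc E) = 12 * v u" using dv0 by simp
    then show "v (disc E) mod 12 = 0" by simp
  qed
  have P2: "(v (disc E) mod 12 = 0 \<and>
           ((residue_char_ne v 2 \<and> residue_char_ne v 3) \<or>
            (residue_char_ne v 2 \<and> has_2torsion E))) \<longrightarrow> good_reduction v E"
  proof
    assume H: "v (disc E) mod 12 = 0 \<and>
           ((residue_char_ne v 2 \<and> residue_char_ne v 3) \<or>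
            (residue_char_ne v 2 \<and> has_2torsion E))"
    obtain m where m: "v (disc E) = 12 * m" using H by (metis dvd_def mod_eq_0_iff_dvd)
    obtain u0 where u0: "u0 \<noteq> 0" "v u0 = m" using dv_surj[OF v] by blast
    have n2: "(2::'a) \<noteq> 0" and v2: "v 2 = 0" using H unfolding residue_char_ne_def by auto
    have lc4: "lb v (4*m) (c4 E)"
    proof (cases "c4 E = 0")
      case True then show ?thesis by (simp add: lb_def)
    next
      case False then show ?thesis using key[OF v ell pg False] m by (simp add: lb_def)
    qed
    have ldisc: "lb v (12*m) (disc E)" using m by (simp add: lb_def)
    obtain a1 a2 a3 a4 a6 where E: "E = (a1,a2,a3,a4,a6)" by (cases E) auto
    from H consider (c1) "residue_char_ne v 3" | (c2) "has_2torsion E" by blast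
    then show "good_reduction v E"
    proof cases
      case c1
      have n3: "(3::'a) \<noteq> 0" and v3: "v 3 = 0" using c1 unfolding residue_char_ne_def by auto
      have n12: "(12::'a) \<noteq> 0"
      proof -
        have "(12::'a) = 2*2*3" by simp
        then show ?thesis using n2 n3 by (metis mult_eq_0_iff)
      qed
      have n4: "(4::'a) \<noteq> 0"
      proof -
        have "(4::'a) = 2*2" by simp
        then show ?thesis using n2 by (metis mult_eq_0_iff)
      qed
      have n48: "(48::'a) \<noteq> 0" and v48: "v 48 = 0"
      proof -
        have e: "(48::'a) = 2^4*3" by simp
        have p: "(2::'a)^4 \<noteq> 0" by (rule power_not_zero[OF n2])
        show "(48::'a) \<noteq> 0" using n3 p e by (metis mult_eq_0_iff)
        show "v 48 = 0" using dv_mul[OF v p n3] dv_power[OF v n2, of 4] v2 v3 by simp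
      qed
      define s where "s = -a1/2"
      define r where "r = -(a1^2+4*a2)/12"
      define t where "t = -(a3 + r*a1)/2"
      have ea1: "a1 = -2*s" using n2 unfolding s_def by simp
      have ea2: "a2 = -3*r - s^2" unfolding r_def s_def using n2 n4 n12 n48 by (simp add: field_simps power2_eq_square)
      have ea3: "a3 = 2*r*s - 2*t" unfolding t_def s_def using n2 by (simp add: field_simps)
      define X4 where "X4 = a4 - s*(2*r*s - 2*t) + 2*r*(-3*r - s^2) - (t + r*s)*(-2*s) + 3*r^2 - 2*s*t"
      define X6 where "X6 = a6 + r*a4 + r^2*(-3*r - s^2) + r^3 - t*(2*r*s - 2*t) - t^2 - r*t*(-2*s)"
      have EE: "E = (-2*s, -3*r - s^2, 2*r*s - 2*t, a4, a6)" using E ea1 ea2 ea3 by simp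
      have CH: "change_coords 1 r s t E = (0, 0, 0, X4, X6)"
        unfolding EE X4_def X6_def by (simp add: algebra_simps power2_eq_square)
      have X4e: "48 * X4 = - c4 E" unfolding X4_def EE by (rule case1_a4)
      have X6e: "864 * X6 = - c6 E" unfolding X6_def EE by (rule case1_a6)
      have n6: "(6::'a) \<noteq> 0"
      proof -
        have "(6::'a) = 2*3" by simp
        then show ?thesis using n2 n3 by (metis mult_eq_0_iff)
      qed
      have v6: "v 6 = 0"
      proof -
        have "(6::'a) = 2*3" by simp
        then show ?thesis using dv_mul[OF v n2 n3] v2 v3 by simp
      qed
      have n864: "(864::'a) \<noteq> 0" and v864: "v 864 = 0"
      proof -
        have e: "(864::'a) = 2^5*3^3" by simp
        have p: "(2::'a)^5 \<noteq> 0" "(3::'a)^3 \<noteq> 0" by (rule power_not_zero[OF n2], rule power_not_zero[OF n3])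
        show "(864::'a) \<noteq> 0" using p e by (metis mult_eq_0_iff)
        show "v 864 = 0" using dv_mul[OF v p] dv_power[OF v n2, of 5] dv_power[OF v n3, of 3]
          v2 v3 by simp
      qed
      define u where "u = u0/6"
      have u: "u \<noteq> 0" using u0 n6 unfolding u_def by simp
      have vu: "v u = m" using dv_divide[OF v u0(1) n6] u0 v6 unfolding u_def by simp
      have E2: "change_coords u r s t E = (0, 0, 0, X4/u^4, X6/u^6)"
        by (subst change_scale) (simp only: CH scale.simps, simp)
      have X4d: "X4 = - c4 E / 48"
      proof -
        have "X4 = (48 * X4) / 48" using n48 by simp
        also have "\<dots> = - c4 E / 48" by (simp only: X4e)
        finally show ?thesis .
      qed
      have X6d: "X6 = - c6 E / 864"
      proof -
        have "X6 = (864 * X6) / 864" using n864 by simp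
        also have "\<dots> = - c6 E / 864" by (simp only: X6e)
        finally show ?thesis .
      qed
      have lX4: "lb v (4*m) X4" unfolding X4d using lb_div[OF v lb_uminus[OF v lc4] n48] v48 by simp
      have c4c6E: "c6 E ^ 2 = c4 E * c4 E * c4 E + - (1728 * disc E)"
      proof -
        have "c4 E ^ 3 - c6 E ^ 2 = 1728 * disc E" using c4c6[of a1 a2 a3 a4 a6] by (simp only: E)
        then have "c6 E ^ 2 = c4 E ^ 3 - 1728 * disc E" by (simp add: algebra_simps)
        then show ?thesis by (simp add: power3_eq_cube)
      qed
      have l1: "lb v (12*m) (c4 E * c4 E * c4 E)"
        using lb_mul[OF v lb_mul[OF v lc4 lc4] lc4] by simp
      have l2: "lb v (12*m) (- (1728 * disc E))"
        using lb_uminus[OF v lb_mul[OF v lb_numeral[OF v] ldisc]] by simp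
      have "lb v (2*(6*m)) (c6 E ^ 2)" unfolding c4c6E using lb_add[OF v l1 l2] by simp
      then have lc6: "lb v (6*m) (c6 E)" by (rule lb_sq[OF v])
      have lX6: "lb v (6*m) X6" unfolding X6d using lb_div[OF v lb_uminus[OF v lc6] n864] v864 by simp
      have i4: "integral v (X4/u^4)"
        using lb_div[OF v lX4, of "u^4"] dv_power[OF v u, of 4] vu u by (simp add: integral_lb)
      have i6: "integral v (X6/u^6)"
        using lb_div[OF v lX6, of "u^6"] dv_power[OF v u, of 6] vu u by (simp add: integral_lb)
      have D: "disc (change_coords u r s t E) = disc E / u^12" by (rule disc_change[OF u])
      have Dn: "disc (change_coords u r s t E) \<noteq> 0" using D dE u by simp
      have Dv: "v (disc (change_coords u r s t E)) = 0"
        using D dv_divide[OF v dE, of "u^12"] dv_power[OF v u, of 12] u vu m by simp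
      have "integral_weier v (change_coords u r s t E)"
        unfolding E2 integral_weier_def using i4 i6 by (simp add: int_zero)
      then show ?thesis unfolding good_reduction_def using u Dn Dv by blast
    next
      case c2
      obtain x0 y0 where cu: "y0^2 + a1*x0*y0 + a3*y0 = x0^3 + a2*x0^2 + a4*x0 + a6"
        and tor: "y0 = - y0 - a1*x0 - a3"
        using c2 E by auto
      define A where "A = (a2 - (-a1/2)*a1 + 3*x0 - (-a1/2)^2) / 1^2"
      define B where "B = (a4 - (-a1/2)*a3 + 2*x0*a2 - (y0 + x0*(-a1/2))*a1 + 3*x0^2 - 2*(-a1/2)*y0) / 1^4"
      have z1: "a1 + 2*(-a1/2) = 0" using n2 by simp
      have z3: "a3 + x0*a1 + 2*y0 = 0"
      proof -
        have "a3 + x0*a1 + 2*y0 = y0 - (- y0 - a1*x0 - a3)" by (simp add: algebra_simps)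
        also have "\<dots> = 0" using tor by simp
        finally show ?thesis .
      qed
      have z5: "a6 + x0*a4 + x0^2*a2 + x0^3 - y0*a3 - y0^2 - x0*y0*a1 = 0"
      proof -
        have "a6 + x0*a4 + x0^2*a2 + x0^3 - y0*a3 - y0^2 - x0*y0*a1
            = (x0^3 + a2*x0^2 + a4*x0 + a6) - (y0^2 + a1*x0*y0 + a3*y0)" by (simp add: algebra_simps)
        also have "\<dots> = 0" using cu by simp
        finally show ?thesis .
      qed
      have CH: "change_coords 1 x0 (-a1/2) y0 E = (0, A, 0, B, 0)"
        unfolding E change_coords.simps z1 z3 z5 A_def B_def by simp
      have E2: "change_coords u0 x0 (-a1/2) y0 E = (0, A/u0^2, 0, B/u0^4, 0)"
        by (subst change_scale) (simp only: CH scale.simps, simp)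
      define A' where "A' = A/u0^2"
      define B' where "B' = B/u0^4"
      have D: "disc (change_coords u0 x0 (-a1/2) y0 E) = disc E / u0^12" by (rule disc_change[OF u0(1)])
      have Dn: "disc (change_coords u0 x0 (-a1/2) y0 E) \<noteq> 0" using D dE u0 by simp
      have Dv: "v (disc (change_coords u0 x0 (-a1/2) y0 E)) = 0"
        using D dv_divide[OF v dE, of "u0^12"] dv_power[OF v u0(1), of 12] u0 m by simp
      have C: "c4 (change_coords u0 x0 (-a1/2) y0 E) = c4 E / u0^4" by (rule c4_change[OF u0(1)])
      have Cl: "lb v 0 (c4 (change_coords u0 x0 (-a1/2) y0 E))"
        unfolding C using lb_div[OF v lc4, of "u0^4"] dv_power[OF v u0(1), of 4] u0 by simp
      have D2: "disc (0, A', 0, B', 0) = 16*B'^2*(A'^2-4*B')"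
        by (simp add: Let_def algebra_simps power2_eq_square power3_eq_cube)
      have C2: "c4 (0, A', 0, B', 0) = 16*(A'^2-3*B')"
        by (simp add: algebra_simps power2_eq_square)
      have "integral v A' \<and> integral v B'"
        apply (rule case2_val[OF v v2 n2])
        using Dn Dv Cl unfolding E2 A'_def[symmetric] B'_def[symmetric] D2 C2 by simp_all
      then have "integral_weier v (change_coords u0 x0 (-a1/2) y0 E)"
        unfolding E2 A'_def[symmetric] B'_def[symmetric] integral_weier_def by (simp add: int_zero)
      then show ?thesis unfolding good_reduction_def using u0 Dn Dv by blast
    qed
  qed
  show ?thesis using P1 P2 by blast
qed

end
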